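(* Let $V$ be a finite dimensional real vector space, let $\mathscr C$ be a collection of cones in $V$ each containing $0$, and let $S$ be a closed convex subset of $V$. If $\mathcal C_S\subseteq\bigcup_{\Gamma\in\mathscr C}\mathcal C_\Gamma$, then $S=\bigcap_{\Gamma\in\mathscr C}(S+\Gamma)$.
   Context: A cone in $V$ is a subset closed under multiplication by positive reals. For $S\subseteq V$, the support function is $H_S:V^*\to\mathbb R\cup\{\pm\infty\}$, $H_S(\lambda)=\sup_{x\in S}\lambda(x)$, and $\mathcal C_S=\{\lambda\in V^*:H_S(\lambda)<\infty\}$. *)

theory Defs
  imports "HOL-Analysis.Analysis"
begin

definition pos_cone :: "'a::real_vector set \<Rightarrow> bool" where
  "pos_cone \<Gamma> \<longleftrightarrow> (\<forall>x\<in>\<Gamma>. \<forall>c::real. c > 0 \<longrightarrow> c *\<^sub>R x \<in> \<Gamma>)"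

definition dual_space :: "('a::real_vector \<Rightarrow> real) set" where
  "dual_space = {l. linear l}"

definition support_fun :: "'a::real_vector set \<Rightarrow> ('a \<Rightarrow> real) \<Rightarrow> ereal" where
  "support_fun S l = (SUP x\<in>S. ereal (l x))"

definition fin_support :: "'a::real_vector set \<Rightarrow> ('a \<Rightarrow> real) set" where
  "fin_support S = {l \<in> dual_space. support_fun S l < \<infinity>}"

definition minkowski_sum :: "'a::real_vector set \<Rightarrow> 'a set \<Rightarrow> 'a set" where
  "minkowski_sum A B = {x + y | x y. x \<in> A \<and> y \<in> B}"

end

theory Submission
  imports Defs
begin

theorem lemma2p24:
  fixes S :: "'a::euclidean_space set" and \<C> :: "'a set set"
  assumes "\<forall>\<Gamma>\<in>\<C>. pos_cone \<Gamma> \<and> 0 \<in> \<Gamma>"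
    and "closed S" and "convex S"
    and "fin_support S \<subseteq> (\<Union>\<Gamma>\<in>\<C>. fin_support \<Gamma>)"
  shows "S = (\<Inter>\<Gamma>\<in>\<C>. minkowski_sum S \<Gamma>)"
proof
  show "S \<subseteq> (\<Inter>\<Gamma>\<in>\<C>. minkowski_sum S \<Gamma>)"
  proof
    fix x assume "x \<in> S"
    show "x \<in> (\<Inter>\<Gamma>\<in>\<C>. minkowski_sum S \<Gamma>)"
    proof
      fix \<Gamma> assume "\<Gamma> \<in> \<C>"
      then have "0 \<in> \<Gamma>" using assms(1) by blast
      then show "x \<in> minkowski_sum S \<Gamma>"
        unfolding minkowski_sum_def using \<open>x \<in> S\<close>
        by (intro CollectI exI[of _ x] exI[of _ 0]) simp
    qed
  qed
next
  show "(\<Inter>\<Gamma>\<in>\<C>. minkowski_sum S \<Gamma>) \<subseteq> S"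
  proof
    fix z assume z: "z \<in> (\<Inter>\<Gamma>\<in>\<C>. minkowski_sum S \<Gamma>)"
    show "z \<in> S"
    proof (rule ccontr)
      assume "z \<notin> S"
      then obtain a b where ab: "inner a z < b" "\<forall>x\<in>S. inner a x > b"
        using separating_hyperplane_closed_point[OF assms(3,2)] by blast
      define l where "l = (\<lambda>y. - inner a y)"
      have lin: "linear l" unfolding l_def
        by (intro linear_compose_neg bounded_linear.linear bounded_linear_inner_right)
      have "support_fun S l \<le> ereal (-b)"
        unfolding support_fun_def l_def
      proof (rule SUP_least)
        fix x assume "x \<in> S"
        then show "ereal (- inner a x) \<le> ereal (- b)" using ab(2) by auto
      qed
      then have "support_fun S l < \<infinity>" by (rule le_less_trans) simp
      with lin have "l \<in> fin_support S" unfolding fin_support_def dual_space_def by auto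
      with assms(4) obtain \<Gamma> where G: "\<Gamma> \<in> \<C>" "l \<in> fin_support \<Gamma>" by blast
      then have fin: "support_fun \<Gamma> l < \<infinity>" unfolding fin_support_def by auto
      have cone: "pos_cone \<Gamma>" using assms(1) G(1) by auto
      have nonpos: "l g \<le> 0" if g: "g \<in> \<Gamma>" for g
      proof (rule ccontr)
        assume "\<not> l g \<le> 0"
        then have pos: "l g > 0" by simp
        obtain M where M: "support_fun \<Gamma> l \<le> ereal M"
          using fin by (cases "support_fun \<Gamma> l") (auto intro: order_refl)
        define c where "c = (\<bar>M\<bar> + 1) / l g"
        have c: "c > 0" unfolding c_def using pos by auto
        have "c *\<^sub>R g \<in> \<Gamma>" using cone g c unfolding pos_cone_def by auto
        then have "ereal (l (c *\<^sub>R g)) \<le> support_fun \<Gamma> l"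
          unfolding support_fun_def by (rule SUP_upper)
        moreover have "l (c *\<^sub>R g) = \<bar>M\<bar> + 1"
          using linear_cmul[OF lin] pos unfolding c_def by simp
        ultimately have "ereal (\<bar>M\<bar> + 1) \<le> ereal M" using M by (metis order_trans)
        then show False by simp
      qed
      from z G(1) obtain s g where sg: "z = s + g" "s \<in> S" "g \<in> \<Gamma>"
        unfolding minkowski_sum_def by blast
      have "l z = l s + l g" using sg(1) linear_add[OF lin] by simp
      also have "\<dots> \<le> l s" using nonpos[OF sg(3)] by simp
      also have "\<dots> < - b" using ab(2) sg(2) unfolding l_def by auto
      finally have "l z < - b" .
      moreover have "l z > - b" using ab(1) unfolding l_def by simp
      ultimately show False by simp
    qed
  qed
qed

end
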